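(* Let $F:B_{++}\to V_{++}$ be continuously differentiable (on an open neighbourhood of $B_{++}$ in $V_{++}$), with components $F_{w_{i,j}}$ ($i\in[K]$, $j\in[n_1]$) and $F_{u_{ab}}$ ($a\in[n_1]$, $b\in[d]$). Suppose $A\in\mathbb{R}^{(K+1)\times(K+1)}_+$ satisfies, for all $i,k\in[K]$, $j,a\in[n_1]$, $b\in[d]$ and $(w,u)\in B_{++}$, $$\langle|\nabla_{w_k}F_{w_{i,j}}(w,u)|,w_k\rangle\le A_{i,k}F_{w_{i,j}}(w,u),\qquad \langle|\nabla_u F_{w_{i,j}}(w,u)|,u\rangle\le A_{i,K+1}F_{w_{i,j}}(w,u),$$ $$\langle|\nabla_{w_k}F_{u_{ab}}(w,u)|,w_k\rangle\le A_{K+1,k}F_{u_{ab}}(w,u),\qquad \langle|\nabla_u F_{u_{ab}}(w,u)|,u\rangle\le A_{K+1,K+1}F_{u_{ab}}(w,u),$$ where $|\cdot|$ is the entrywise absolute value and $\langle\cdot,\cdot\rangle$ the Euclidean (Frobenius) inner product. Then for every $\gamma\in\mathbb{R}^{K+1}_{++}$ and all $(w,u),(\tilde w,\tilde u)\in B_{++}$, $$\mu_\gamma\big(F(w,u),F(\tilde w,\tilde u)\big)\le U\,\mu_\gamma\big((w,u),(\tilde w,\tilde u)\big),\qquad U=\max_{k\in[K+1]}\frac{(A^T\gamma)_k}{\gamma_k}.$$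
   Context: $\mathbb{R}_{++}=(0,\infty)$. $V_{++}=\mathbb{R}^{K\times n_1}_{++}\times\mathbb{R}^{n_1\times d}_{++}$; $w$ has rows $w_1,\dots,w_K$. Given $p_w,p_u\in(1,\infty)$ and $\rho_w,\rho_u>0$, $B_{++}=\{(w,u)\in V_{++} : \|u\|_{p_u}\le\rho_u,\ \|w_i\|_{p_w}\le\rho_w\ \forall i\in[K]\}$ ($\|u\|_{p_u}$ is the entrywise $\ell_{p_u}$ norm). For $\gamma\in\mathbb{R}^{K+1}_{++}$ the weighted Thompson metric on $B_{++}$ is $$\mu_\gamma\big((w,u),(\tilde w,\tilde u)\big)=\sum_{i=1}^K\gamma_i\|\ln(w_i)-\ln(\tilde w_i)\|_\infty+\gamma_{K+1}\|\ln(u)-\ln(\tilde u)\|_\infty,$$ with $\ln$ applied entrywise and $\|\cdot\|_\infty$ the maximum absolute entry. *)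

theory Defs
  imports "HOL-Analysis.Analysis"
begin

text \<open>Index K+1 of the (K+1)-vectors/matrices is represented by None,
index i in [K] by Some i.\<close>

type_synonym ('k,'n,'d) pt = "(real^'n^'k) \<times> (real^'d^'n)"

definition Vpp :: "('k::finite,'n::finite,'d::finite) pt set" where
  "Vpp = {(w,u). (\<forall>i j. 0 < w $ i $ j) \<and> (\<forall>a b. 0 < u $ a $ b)}"

definition lp_row :: "real \<Rightarrow> real^'n::finite \<Rightarrow> real" where
  "lp_row p v = (\<Sum>j\<in>UNIV. \<bar>v $ j\<bar> powr p) powr (1/p)"

definition lp_mat :: "real \<Rightarrow> real^'d::finite^'n::finite \<Rightarrow> real" where
  "lp_mat p u = (\<Sum>a\<in>UNIV. \<Sum>b\<in>UNIV. \<bar>u $ a $ b\<bar> powr p) powr (1/p)"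

definition Bpp :: "real \<Rightarrow> real \<Rightarrow> real \<Rightarrow> real \<Rightarrow> ('k::finite,'n::finite,'d::finite) pt set" where
  "Bpp pw pu \<rho>w \<rho>u = {(w,u) \<in> Vpp. lp_mat pu u \<le> \<rho>u \<and> (\<forall>i. lp_row pw (w $ i) \<le> \<rho>w)}"

definition thompson :: "real^('k::finite option) \<Rightarrow> ('k,'n::finite,'d::finite) pt \<Rightarrow> ('k,'n,'d) pt \<Rightarrow> real" where
  "thompson \<gamma> x y =
     (\<Sum>i\<in>UNIV. \<gamma> $ Some i * Max (range (\<lambda>j. \<bar>ln (fst x $ i $ j) - ln (fst y $ i $ j)\<bar>)))
     + \<gamma> $ None * Max (range (\<lambda>(a,b). \<bar>ln (snd x $ a $ b) - ln (snd y $ a $ b)\<bar>))"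

definition dirW :: "'k::finite \<Rightarrow> 'n::finite \<Rightarrow> ('k,'n,'d::finite) pt" where
  "dirW k l = ((\<chi> i j. if i = k \<and> j = l then 1 else 0), 0)"

definition dirU :: "'n::finite \<Rightarrow> 'd::finite \<Rightarrow> ('k::finite,'n,'d) pt" where
  "dirU a b = (0, (\<chi> i j. if i = a \<and> j = b then 1 else 0))"

end

theory Submission
  imports Defs
begin

lemma log_mvt:
  fixes g g' :: "real \<Rightarrow> real"
  assumes d: "\<And>t. 0\<le>t \<Longrightarrow> t\<le>1 \<Longrightarrow> (g has_real_derivative g' t) (at t)"
    and pos: "\<And>t. 0\<le>t \<Longrightarrow> t\<le>1 \<Longrightarrow> 0 < g t"
    and b: "\<And>t. 0\<le>t \<Longrightarrow> t\<le>1 \<Longrightarrow> \<bar>g' t\<bar> \<le> M * g t"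
  shows "\<bar>ln (g 1) - ln (g 0)\<bar> \<le> M"
proof -
  have "((\<lambda>t. ln (g t)) has_real_derivative g' t / g t) (at t)" if "0\<le>t" "t\<le>1" for t
    using DERIV_chain2[OF DERIV_ln[OF pos[OF that]] d[OF that]] by (simp add: divide_inverse mult.commute)
  from MVT2[of 0 1 "\<lambda>t. ln (g t)", OF _ this] obtain z where z: "0<z" "z<1"
    "ln (g 1) - ln (g 0) = g' z / g z" by auto
  have "\<bar>g' z / g z\<bar> \<le> M" 
  proof -
    have gz: "0 < g z" using pos z by auto
    have "\<bar>g' z / g z\<bar> = \<bar>g' z\<bar> / g z" using gz by simp
    also have "\<dots> \<le> M" using b[of z] z gz by (subst pos_divide_le_eq) auto
    finally show ?thesis .
  qed
  thus ?thesis using z by simp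
qed

lemma lp_interp:
  fixes a b :: "'a \<Rightarrow> real"
  assumes S: "finite S" and p: "0 < p" and ab: "\<And>j. j\<in>S \<Longrightarrow> 0 < a j \<and> 0 < b j"
    and A: "(\<Sum>j\<in>S. \<bar>a j\<bar> powr p) powr (1/p) \<le> \<rho>"
    and B: "(\<Sum>j\<in>S. \<bar>b j\<bar> powr p) powr (1/p) \<le> \<rho>"
    and t: "0 \<le> t" "t \<le> 1"
  shows "(\<Sum>j\<in>S. \<bar>exp ((1-t)*ln (a j) + t*ln (b j))\<bar> powr p) powr (1/p) \<le> \<rho>"
proof -
  define X where "X = (\<Sum>j\<in>S. \<bar>a j\<bar> powr p)"
  define Y where "Y = (\<Sum>j\<in>S. \<bar>b j\<bar> powr p)"
  have X0: "X \<ge> 0" "Y \<ge> 0" unfolding X_def Y_def by (auto intro: sum_nonneg)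
  have r0: "\<rho> \<ge> 0" using A X_def by (metis order.trans powr_ge_zero)
  have Xr: "X \<le> \<rho> powr p"
  proof -
    have "X = (X powr (1/p)) powr p" using X0 p by (simp add: powr_powr)
    also have "\<dots> \<le> \<rho> powr p" using A X_def p by (intro powr_mono2) auto
    finally show ?thesis .
  qed
  have Yr: "Y \<le> \<rho> powr p"
  proof -
    have "Y = (Y powr (1/p)) powr p" using X0 p by (simp add: powr_powr)
    also have "\<dots> \<le> \<rho> powr p" using B Y_def p by (intro powr_mono2) auto
    finally show ?thesis .
  qed
  have pt: "\<bar>exp ((1-t)*ln (a j) + t*ln (b j))\<bar> powr p \<le> (1-t) * \<bar>a j\<bar> powr p + t * \<bar>b j\<bar> powr p"
    if j: "j \<in> S" for j
  proof -
    have "\<bar>exp ((1-t)*ln (a j) + t*ln (b j))\<bar> powr p = exp (p * ((1-t)*ln (a j) + t*ln (b j)))"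
      by (simp add: powr_def)
    also have "\<dots> = exp ((1-t)*(p*ln (a j)) + t*(p*ln (b j)))"
      by (simp add: algebra_simps)
    also have "\<dots> \<le> (1-t) * exp (p*ln (a j)) + t * exp (p*ln (b j))"
      using convex_onD[OF exp_convex, of t "p*ln (a j)" "p*ln (b j)"] t by simp
    also have "\<dots> = (1-t) * \<bar>a j\<bar> powr p + t * \<bar>b j\<bar> powr p"
      using ab[OF j] by (simp add: powr_def)
    finally show ?thesis .
  qed
  have "(\<Sum>j\<in>S. \<bar>exp ((1-t)*ln (a j) + t*ln (b j))\<bar> powr p) \<le> (1-t) * X + t * Y"
    unfolding X_def Y_def sum_distrib_left sum.distrib[symmetric] by (rule sum_mono) (rule pt)
  also have "\<dots> \<le> (1-t) * \<rho> powr p + t * \<rho> powr p"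
    using t Xr Yr by (intro add_mono mult_left_mono) auto
  also have "\<dots> = \<rho> powr p" by (simp add: left_diff_distrib)
  finally have Z: "(\<Sum>j\<in>S. \<bar>exp ((1-t)*ln (a j) + t*ln (b j))\<bar> powr p) \<le> \<rho> powr p" .
  have "(\<Sum>j\<in>S. \<bar>exp ((1-t)*ln (a j) + t*ln (b j))\<bar> powr p) powr (1/p) \<le> (\<rho> powr p) powr (1/p)"
    using Z p by (intro powr_mono2) (auto intro: sum_nonneg)
  also have "\<dots> = \<rho>" using r0 p by (simp add: powr_powr)
  finally show ?thesis .
qed

lemma double_delta:
  fixes f :: "'a::finite \<Rightarrow> 'b::finite \<Rightarrow> real"
  shows "(\<Sum>k\<in>UNIV. \<Sum>l\<in>UNIV. if i = k \<and> j = l then f k l else 0) = f i j"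
proof -
  have "\<And>k. (\<Sum>l\<in>UNIV. if i = k \<and> j = l then f k l else 0) = (if i = k then f k j else 0)"
    by (case_tac "i = k") (simp_all add: sum.delta)
  thus ?thesis by (simp add: sum.delta)
qed

definition comb :: "('k::finite \<Rightarrow> 'n::finite \<Rightarrow> real) \<Rightarrow> ('n \<Rightarrow> 'd::finite \<Rightarrow> real) \<Rightarrow> ('k,'n,'d) pt" where
  "comb c e = (\<Sum>k\<in>UNIV. \<Sum>l\<in>UNIV. c k l *\<^sub>R dirW k l) + (\<Sum>a\<in>UNIV. \<Sum>b\<in>UNIV. e a b *\<^sub>R dirU a b)"

lemma comb_fst: "fst (comb c e) $ i $ j = c i j"
proof -
  have "fst (comb c e) $ i $ j = (\<Sum>k\<in>UNIV. \<Sum>l\<in>UNIV. c k l * (if i = k \<and> j = l then 1 else 0))"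
    by (simp add: comb_def fst_sum sum_component dirW_def dirU_def)
  also have "\<dots> = c i j"
    by (simp add: if_distrib[of "\<lambda>x. _ * x"] cong: if_cong)
       (rule double_delta)
  finally show ?thesis .
qed

lemma comb_snd: "snd (comb c e) $ a $ b = e a b"
proof -
  have "snd (comb c e) $ a $ b = (\<Sum>k\<in>UNIV. \<Sum>l\<in>UNIV. e k l * (if a = k \<and> b = l then 1 else 0))"
    by (simp add: comb_def snd_sum sum_component dirW_def dirU_def)
  also have "\<dots> = e a b"
    by (simp add: if_distrib[of "\<lambda>x. _ * x"] cong: if_cong)
       (rule double_delta)
  finally show ?thesis .
qed

lemma comb_eq: "comb c e = x \<longleftrightarrow> (\<forall>i j. c i j = fst x $ i $ j) \<and> (\<forall>a b. e a b = snd x $ a $ b)"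
  by (auto simp: prod_eq_iff vec_eq_iff comb_fst comb_snd)


definition ew :: "('k::finite,'n::finite,'d::finite) pt \<Rightarrow> ('k,'n,'d) pt \<Rightarrow> real \<Rightarrow> 'k \<Rightarrow> 'n \<Rightarrow> real" where
  "ew x y t k l = exp ((1-t) * ln (fst x $ k $ l) + t * ln (fst y $ k $ l))"
definition eu :: "('k::finite,'n::finite,'d::finite) pt \<Rightarrow> ('k,'n,'d) pt \<Rightarrow> real \<Rightarrow> 'n \<Rightarrow> 'd \<Rightarrow> real" where
  "eu x y t a b = exp ((1-t) * ln (snd x $ a $ b) + t * ln (snd y $ a $ b))"
definition zpath :: "('k::finite,'n::finite,'d::finite) pt \<Rightarrow> ('k,'n,'d) pt \<Rightarrow> real \<Rightarrow> ('k,'n,'d) pt" where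
  "zpath x y t = comb (ew x y t) (eu x y t)"
definition dw :: "('k::finite,'n::finite,'d::finite) pt \<Rightarrow> ('k,'n,'d) pt \<Rightarrow> 'k \<Rightarrow> 'n \<Rightarrow> real" where
  "dw x y k l = ln (fst y $ k $ l) - ln (fst x $ k $ l)"
definition du :: "('k::finite,'n::finite,'d::finite) pt \<Rightarrow> ('k,'n,'d) pt \<Rightarrow> 'n \<Rightarrow> 'd \<Rightarrow> real" where
  "du x y a b = ln (snd y $ a $ b) - ln (snd x $ a $ b)"
definition zder :: "('k::finite,'n::finite,'d::finite) pt \<Rightarrow> ('k,'n,'d) pt \<Rightarrow> real \<Rightarrow> ('k,'n,'d) pt" where
  "zder x y t = comb (\<lambda>k l. ew x y t k l * dw x y k l) (\<lambda>a b. eu x y t a b * du x y a b)"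

lemma zpath_0: "x \<in> Vpp \<Longrightarrow> zpath x y 0 = x"
  by (auto simp: zpath_def comb_eq ew_def eu_def Vpp_def)

lemma zpath_1: "y \<in> Vpp \<Longrightarrow> zpath x y 1 = y"
  by (auto simp: zpath_def comb_eq ew_def eu_def Vpp_def)

lemma ew_deriv: "((\<lambda>t. ew x y t k l) has_derivative (\<lambda>h. (ew x y t k l * dw x y k l) * h)) (at t)"
proof -
  have "((\<lambda>t. ew x y t k l) has_real_derivative ew x y t k l * dw x y k l) (at t)"
    unfolding ew_def dw_def by (auto intro!: derivative_eq_intros simp: algebra_simps)
  thus ?thesis by (simp add: has_field_derivative_def)
qed

lemma eu_deriv: "((\<lambda>t. eu x y t a b) has_derivative (\<lambda>h. (eu x y t a b * du x y a b) * h)) (at t)"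
proof -
  have "((\<lambda>t. eu x y t a b) has_real_derivative eu x y t a b * du x y a b) (at t)"
    unfolding eu_def du_def by (auto intro!: derivative_eq_intros simp: algebra_simps)
  thus ?thesis by (simp add: has_field_derivative_def)
qed

lemma zpath_deriv: "(zpath x y has_derivative (\<lambda>h. h *\<^sub>R zder x y t)) (at t)"
proof -
  have "((\<lambda>t. (\<Sum>k\<in>UNIV. \<Sum>l\<in>UNIV. ew x y t k l *\<^sub>R dirW k l) + (\<Sum>a\<in>UNIV. \<Sum>b\<in>UNIV. eu x y t a b *\<^sub>R dirU a b))
     has_derivative (\<lambda>h. (\<Sum>k\<in>UNIV. \<Sum>l\<in>UNIV. ((ew x y t k l * dw x y k l) * h) *\<^sub>R dirW k l) + (\<Sum>a\<in>UNIV. \<Sum>b\<in>UNIV. ((eu x y t a b * du x y a b) * h) *\<^sub>R dirU a b))) (at t)"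
    by (intro has_derivative_add has_derivative_sum has_derivative_scaleR_left ew_deriv eu_deriv)
  moreover have "(\<lambda>h. (\<Sum>k\<in>UNIV. \<Sum>l\<in>UNIV. ((ew x y t k l * dw x y k l) * h) *\<^sub>R dirW k l) + (\<Sum>a\<in>UNIV. \<Sum>b\<in>UNIV. ((eu x y t a b * du x y a b) * h) *\<^sub>R dirU a b))
     = (\<lambda>h. h *\<^sub>R zder x y t)"
    by (rule ext) (simp add: zder_def comb_def scaleR_add_right scaleR_sum_right mult.commute)
  ultimately show ?thesis unfolding zpath_def comb_def by simp
qed


lemma zpath_Bpp:
  assumes x: "x \<in> Bpp pw pu \<rho>w \<rho>u" and y: "y \<in> Bpp pw pu \<rho>w \<rho>u"
    and pw: "0 < pw" and pu: "0 < pu" and t: "0 \<le> t" "t \<le> 1"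
  shows "zpath x y t \<in> Bpp pw pu \<rho>w \<rho>u"
proof -
  obtain w u where z: "zpath x y t = (w,u)" by (cases "zpath x y t")
  have wc: "w $ i $ j = ew x y t i j" for i j using comb_fst[of "ew x y t" "eu x y t" i j] z
    by (simp add: zpath_def)
  have uc: "u $ a $ b = eu x y t a b" for a b using comb_snd[of "ew x y t" "eu x y t" a b] z
    by (simp add: zpath_def)
  have xp: "\<And>i j. 0 < fst x $ i $ j" "\<And>a b. 0 < snd x $ a $ b"
    and yp: "\<And>i j. 0 < fst y $ i $ j" "\<And>a b. 0 < snd y $ a $ b"
    using x y by (auto simp: Bpp_def Vpp_def)
  have xr: "\<And>i. lp_row pw (fst x $ i) \<le> \<rho>w" "lp_mat pu (snd x) \<le> \<rho>u"
   and yr: "\<And>i. lp_row pw (fst y $ i) \<le> \<rho>w" "lp_mat pu (snd y) \<le> \<rho>u"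
    using x y by (auto simp: Bpp_def)
  have V: "(w,u) \<in> Vpp" by (simp add: Vpp_def wc uc ew_def eu_def)
  have R: "lp_row pw (w $ i) \<le> \<rho>w" for i
  proof -
    have "lp_row pw (w $ i) = (\<Sum>j\<in>UNIV. \<bar>exp ((1-t)*ln (fst x $ i $ j) + t*ln (fst y $ i $ j))\<bar> powr pw) powr (1/pw)"
      by (simp add: lp_row_def wc ew_def)
    also have "\<dots> \<le> \<rho>w"
      by (rule lp_interp[OF _ pw _ xr(1)[of i, unfolded lp_row_def] yr(1)[of i, unfolded lp_row_def] t])
         (simp_all add: xp yp)
    finally show ?thesis .
  qed
  have M: "lp_mat pu u \<le> \<rho>u"
  proof -
    have cp: "\<And>f :: 'n \<Rightarrow> 'd \<Rightarrow> real. (\<Sum>a\<in>UNIV. \<Sum>b\<in>UNIV. f a b) = (\<Sum>q\<in>UNIV. f (fst q) (snd q))"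
      by (simp add: sum.cartesian_product split_def)
    have "lp_mat pu u = (\<Sum>q\<in>UNIV. \<bar>exp ((1-t)*ln ((\<lambda>q. snd x $ fst q $ snd q) q) + t*ln ((\<lambda>q. snd y $ fst q $ snd q) q))\<bar> powr pu) powr (1/pu)"
      by (simp add: lp_mat_def uc eu_def cp)
    also have "\<dots> \<le> \<rho>u"
      by (rule lp_interp[OF _ pu _ xr(2)[unfolded lp_mat_def cp] yr(2)[unfolded lp_mat_def cp] t])
         (simp_all add: xp yp)
    finally show ?thesis .
  qed
  show ?thesis using z V R M by (simp add: Bpp_def)
qed


definition Dw :: "('k::finite,'n::finite,'d::finite) pt \<Rightarrow> ('k,'n,'d) pt \<Rightarrow> 'k \<Rightarrow> real" where
  "Dw x y i = Max (range (\<lambda>j. \<bar>ln (fst x $ i $ j) - ln (fst y $ i $ j)\<bar>))"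
definition Du :: "('k::finite,'n::finite,'d::finite) pt \<Rightarrow> ('k,'n,'d) pt \<Rightarrow> real" where
  "Du x y = Max (range (\<lambda>(a,b). \<bar>ln (snd x $ a $ b) - ln (snd y $ a $ b)\<bar>))"

lemma dw_le: "\<bar>dw x y k l\<bar> \<le> Dw x y k"
  unfolding Dw_def dw_def by (rule Max_ge) (auto simp: abs_minus_commute)

lemma du_le: "\<bar>du x y a b\<bar> \<le> Du x y"
proof -
  have "\<bar>du x y a b\<bar> = (\<lambda>(a,b). \<bar>ln (snd x $ a $ b) - ln (snd y $ a $ b)\<bar>) (a,b)"
    by (simp add: du_def abs_minus_commute)
  also have "\<dots> \<le> Du x y" unfolding Du_def by (rule Max_ge) auto
  finally show ?thesis .
qed

lemma Dw_nonneg: "0 \<le> Dw x y k" using dw_le[of x y k] by (meson abs_ge_zero order.trans)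
lemma Du_nonneg: "0 \<le> Du x y" using du_le[of x y] by (meson abs_ge_zero order.trans)

lemma coord_bound:
  fixes F :: "('k::finite,'n::finite,'d::finite) pt \<Rightarrow> ('k,'n,'d) pt"
    and F' :: "('k,'n,'d) pt \<Rightarrow> (('k,'n,'d) pt \<Rightarrow>\<^sub>L ('k,'n,'d) pt)"
    and P :: "('k,'n,'d) pt \<Rightarrow> real"
  assumes P: "bounded_linear P"
    and x: "x \<in> Bpp pw pu \<rho>w \<rho>u" and y: "y \<in> Bpp pw pu \<rho>w \<rho>u"
    and pw: "0 < pw" and pu: "0 < pu"
    and Fd: "\<And>z. z \<in> Bpp pw pu \<rho>w \<rho>u \<Longrightarrow> (F has_derivative blinfun_apply (F' z)) (at z)"
    and Fpos: "\<And>z. z \<in> Bpp pw pu \<rho>w \<rho>u \<Longrightarrow> 0 < P (F z)"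
    and hW: "\<And>k w u. (w,u) \<in> Bpp pw pu \<rho>w \<rho>u \<Longrightarrow>
       (\<Sum>l\<in>UNIV. \<bar>P (F' (w,u) (dirW k l))\<bar> * w $ k $ l) \<le> aW k * P (F (w,u))"
    and hU: "\<And>w u. (w,u) \<in> Bpp pw pu \<rho>w \<rho>u \<Longrightarrow>
       (\<Sum>a\<in>UNIV. \<Sum>b\<in>UNIV. \<bar>P (F' (w,u) (dirU a b))\<bar> * u $ a $ b) \<le> aU * P (F (w,u))"
  shows "\<bar>ln (P (F x)) - ln (P (F y))\<bar> \<le> (\<Sum>k\<in>UNIV. aW k * Dw x y k) + aU * Du x y"
proof -
  interpret P: bounded_linear P by (rule P)
  define g where "g = (\<lambda>t. P (F (zpath x y t)))"
  define g' where "g' = (\<lambda>t. P (F' (zpath x y t) (zder x y t)))"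
  define M where "M = (\<Sum>k\<in>UNIV. aW k * Dw x y k) + aU * Du x y"
  have zB: "zpath x y t \<in> Bpp pw pu \<rho>w \<rho>u" if "0 \<le> t" "t \<le> 1" for t
    using zpath_Bpp[OF x y pw pu that] .
  have d: "(g has_real_derivative g' t) (at t)" if t: "0 \<le> t" "t \<le> 1" for t
  proof -
    have "((F \<circ> zpath x y) has_derivative (blinfun_apply (F' (zpath x y t)) \<circ> (\<lambda>h. h *\<^sub>R zder x y t))) (at t)"
      by (rule diff_chain_at[OF zpath_deriv Fd[OF zB[OF t]]])
    from P.has_derivative[OF this]
    have "(g has_derivative (\<lambda>h. P ((blinfun_apply (F' (zpath x y t)) \<circ> (\<lambda>h. h *\<^sub>R zder x y t)) h))) (at t)"
      by (simp add: g_def o_def)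
    moreover have "(\<lambda>h. P ((blinfun_apply (F' (zpath x y t)) \<circ> (\<lambda>h. h *\<^sub>R zder x y t)) h)) = (\<lambda>h. g' t * h)"
      by (rule ext) (simp add: g'_def blinfun.scaleR_right P.scale)
    ultimately show ?thesis by (simp add: has_field_derivative_def)
  qed
  have pos: "0 < g t" if "0 \<le> t" "t \<le> 1" for t
    using Fpos[OF zB[OF that]] by (simp add: g_def)
  have b: "\<bar>g' t\<bar> \<le> M * g t" if t: "0 \<le> t" "t \<le> 1" for t
  proof -
    obtain w u where z: "zpath x y t = (w,u)" by (cases "zpath x y t")
    have wu: "(w,u) \<in> Bpp pw pu \<rho>w \<rho>u" using zB[OF t] z by simp
    have wc: "w $ i $ j = ew x y t i j" for i j using comb_fst[of "ew x y t" "eu x y t" i j] z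
      by (simp add: zpath_def)
    have uc: "u $ a $ b = eu x y t a b" for a b using comb_snd[of "ew x y t" "eu x y t" a b] z
      by (simp add: zpath_def)
    have wpos: "0 \<le> w $ i $ j" for i j by (simp add: wc ew_def)
    have upos: "0 \<le> u $ a $ b" for a b by (simp add: uc eu_def)
    let ?L = "F' (w,u)"
    have geq: "g' t = (\<Sum>k\<in>UNIV. \<Sum>l\<in>UNIV. (w $ k $ l * dw x y k l) * P (?L (dirW k l)))
                  + (\<Sum>a\<in>UNIV. \<Sum>b\<in>UNIV. (u $ a $ b * du x y a b) * P (?L (dirU a b)))"
      by (simp add: g'_def z zder_def comb_def blinfun.add_right blinfun.sum_right blinfun.scaleR_right
          P.add P.sum P.scale wc uc)
    have W: "\<bar>\<Sum>l\<in>UNIV. (w $ k $ l * dw x y k l) * P (?L (dirW k l))\<bar> \<le> Dw x y k * (aW k * g t)" for k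
    proof -
      have "\<bar>\<Sum>l\<in>UNIV. (w $ k $ l * dw x y k l) * P (?L (dirW k l))\<bar>
          \<le> (\<Sum>l\<in>UNIV. \<bar>(w $ k $ l * dw x y k l) * P (?L (dirW k l))\<bar>)" by (rule sum_abs)
      also have "\<dots> \<le> (\<Sum>l\<in>UNIV. Dw x y k * (\<bar>P (?L (dirW k l))\<bar> * w $ k $ l))"
      proof (rule sum_mono)
        fix l
        have "\<bar>(w $ k $ l * dw x y k l) * P (?L (dirW k l))\<bar> = \<bar>dw x y k l\<bar> * (\<bar>P (?L (dirW k l))\<bar> * w $ k $ l)"
          using wpos[of k l] by (simp add: abs_mult)
        also have "\<dots> \<le> Dw x y k * (\<bar>P (?L (dirW k l))\<bar> * w $ k $ l)"
          using wpos[of k l] by (intro mult_right_mono dw_le) auto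
        finally show "\<bar>(w $ k $ l * dw x y k l) * P (?L (dirW k l))\<bar> \<le> Dw x y k * (\<bar>P (?L (dirW k l))\<bar> * w $ k $ l)" .
      qed
      also have "\<dots> = Dw x y k * (\<Sum>l\<in>UNIV. \<bar>P (?L (dirW k l))\<bar> * w $ k $ l)"
        by (simp add: sum_distrib_left)
      also have "\<dots> \<le> Dw x y k * (aW k * g t)"
        using mult_left_mono[OF hW[OF wu, of k] Dw_nonneg[of x y k]] by (simp add: g_def z)
      finally show ?thesis .
    qed
    have U: "\<bar>\<Sum>a\<in>UNIV. \<Sum>b\<in>UNIV. (u $ a $ b * du x y a b) * P (?L (dirU a b))\<bar> \<le> Du x y * (aU * g t)"
    proof -
      have "\<bar>\<Sum>a\<in>UNIV. \<Sum>b\<in>UNIV. (u $ a $ b * du x y a b) * P (?L (dirU a b))\<bar>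
          \<le> (\<Sum>a\<in>UNIV. \<bar>\<Sum>b\<in>UNIV. (u $ a $ b * du x y a b) * P (?L (dirU a b))\<bar>)" by (rule sum_abs)
      also have "\<dots> \<le> (\<Sum>a\<in>UNIV. \<Sum>b\<in>UNIV. \<bar>(u $ a $ b * du x y a b) * P (?L (dirU a b))\<bar>)"
        by (intro sum_mono sum_abs)
      also have "\<dots> \<le> (\<Sum>a\<in>UNIV. \<Sum>b\<in>UNIV. Du x y * (\<bar>P (?L (dirU a b))\<bar> * u $ a $ b))"
      proof (intro sum_mono)
        fix a b
        have "\<bar>(u $ a $ b * du x y a b) * P (?L (dirU a b))\<bar> = \<bar>du x y a b\<bar> * (\<bar>P (?L (dirU a b))\<bar> * u $ a $ b)"
          using upos[of a b] by (simp add: abs_mult)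
        also have "\<dots> \<le> Du x y * (\<bar>P (?L (dirU a b))\<bar> * u $ a $ b)"
          using upos[of a b] by (intro mult_right_mono du_le) auto
        finally show "\<bar>(u $ a $ b * du x y a b) * P (?L (dirU a b))\<bar> \<le> Du x y * (\<bar>P (?L (dirU a b))\<bar> * u $ a $ b)" .
      qed
      also have "\<dots> = Du x y * (\<Sum>a\<in>UNIV. \<Sum>b\<in>UNIV. \<bar>P (?L (dirU a b))\<bar> * u $ a $ b)"
        by (simp add: sum_distrib_left)
      also have "\<dots> \<le> Du x y * (aU * g t)"
        using mult_left_mono[OF hU[OF wu] Du_nonneg[of x y]] by (simp add: g_def z)
      finally show ?thesis .
    qed
    have "\<bar>g' t\<bar> \<le> (\<Sum>k\<in>UNIV. \<bar>\<Sum>l\<in>UNIV. (w $ k $ l * dw x y k l) * P (?L (dirW k l))\<bar>)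
          + \<bar>\<Sum>a\<in>UNIV. \<Sum>b\<in>UNIV. (u $ a $ b * du x y a b) * P (?L (dirU a b))\<bar>"
      unfolding geq by (rule order.trans[OF abs_triangle_ineq add_right_mono[OF sum_abs]])
    also have "\<dots> \<le> (\<Sum>k\<in>UNIV. Dw x y k * (aW k * g t)) + Du x y * (aU * g t)"
      by (intro add_mono sum_mono W U)
    also have "\<dots> = M * g t"
      by (simp add: M_def distrib_left sum_distrib_left mult_ac)
    finally show ?thesis .
  qed
  have "\<bar>ln (g 1) - ln (g 0)\<bar> \<le> M" by (rule log_mvt[OF d pos b])
  moreover have "g 0 = P (F x)" "g 1 = P (F y)"
    using x y by (auto simp: g_def zpath_0 zpath_1 Bpp_def)
  ultimately show ?thesis by (simp add: M_def abs_minus_commute)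
qed


lemma sum_option: "(\<Sum>c\<in>(UNIV :: 'k::finite option set). f c) = f None + (\<Sum>k\<in>UNIV. f (Some k))"
proof -
  have "(\<Sum>c\<in>(UNIV :: 'k option set). f c) = (\<Sum>c\<in>insert None (range Some). f c)"
    by (subst UNIV_option_conv) (rule refl)
  also have "\<dots> = f None + (\<Sum>c\<in>range Some. f c)" by (subst sum.insert) auto
  also have "(\<Sum>c\<in>range Some. f c) = (\<Sum>k\<in>UNIV. f (Some k))" by (subst sum.reindex) (auto simp: inj_on_def)
  finally show ?thesis .
qed

lemma blin_fst: "bounded_linear (\<lambda>p::('k::finite,'n::finite,'d::finite) pt. fst p $ i $ j)"
proof -
  have "bounded_linear (\<lambda>p::('k,'n,'d) pt. fst p $ i)"
    using bounded_linear_compose[where f="\<lambda>v. v $ i" and g="fst", OF bounded_linear_vec_nth bounded_linear_fst] .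
  from bounded_linear_compose[where f="\<lambda>v. v $ j", OF bounded_linear_vec_nth this] show ?thesis .
qed

lemma blin_snd: "bounded_linear (\<lambda>p::('k::finite,'n::finite,'d::finite) pt. snd p $ i $ j)"
proof -
  have "bounded_linear (\<lambda>p::('k,'n,'d) pt. snd p $ i)"
    using bounded_linear_compose[where f="\<lambda>v. v $ i" and g="snd", OF bounded_linear_vec_nth bounded_linear_snd] .
  from bounded_linear_compose[where f="\<lambda>v. v $ j", OF bounded_linear_vec_nth this] show ?thesis .
qed

theorem mainTheorem6:
  fixes F :: "('k::finite,'n::finite,'d::finite) pt \<Rightarrow> ('k,'n,'d) pt"
    and F' :: "('k,'n,'d) pt \<Rightarrow> (('k,'n,'d) pt \<Rightarrow>\<^sub>L ('k,'n,'d) pt)"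
    and S :: "('k,'n,'d) pt set"
    and A :: "real^('k option)^('k option)"
    and \<gamma> :: "real^('k option)"
    and pw pu \<rho>w \<rho>u :: real
  assumes pw: "1 < pw" and pu: "1 < pu" and \<rho>w: "0 < \<rho>w" and \<rho>u: "0 < \<rho>u"
    and F_maps: "F ` Bpp pw pu \<rho>w \<rho>u \<subseteq> Vpp"
    and S_open: "open S" and S_sub: "Bpp pw pu \<rho>w \<rho>u \<subseteq> S" and S_V: "S \<subseteq> Vpp"
    and F_deriv: "\<And>x. x \<in> S \<Longrightarrow> (F has_derivative blinfun_apply (F' x)) (at x)"
    and F'_cont: "continuous_on S F'"
    and A_nonneg: "\<And>i k. 0 \<le> A $ i $ k"
    and ww: "\<And>i j k w u. (w,u) \<in> Bpp pw pu \<rho>w \<rho>u \<Longrightarrow>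
       (\<Sum>l\<in>UNIV. \<bar>fst (F' (w,u) (dirW k l)) $ i $ j\<bar> * w $ k $ l)
         \<le> A $ Some i $ Some k * fst (F (w,u)) $ i $ j"
    and wu: "\<And>i j w u. (w,u) \<in> Bpp pw pu \<rho>w \<rho>u \<Longrightarrow>
       (\<Sum>a\<in>UNIV. \<Sum>b\<in>UNIV. \<bar>fst (F' (w,u) (dirU a b)) $ i $ j\<bar> * u $ a $ b)
         \<le> A $ Some i $ None * fst (F (w,u)) $ i $ j"
    and uw: "\<And>a b k w u. (w,u) \<in> Bpp pw pu \<rho>w \<rho>u \<Longrightarrow>
       (\<Sum>l\<in>UNIV. \<bar>snd (F' (w,u) (dirW k l)) $ a $ b\<bar> * w $ k $ l)
         \<le> A $ None $ Some k * snd (F (w,u)) $ a $ b"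
    and uu: "\<And>a b w u. (w,u) \<in> Bpp pw pu \<rho>w \<rho>u \<Longrightarrow>
       (\<Sum>a'\<in>UNIV. \<Sum>b'\<in>UNIV. \<bar>snd (F' (w,u) (dirU a' b')) $ a $ b\<bar> * u $ a' $ b')
         \<le> A $ None $ None * snd (F (w,u)) $ a $ b"
    and \<gamma>_pos: "\<And>k. 0 < \<gamma> $ k"
    and x: "x \<in> Bpp pw pu \<rho>w \<rho>u" and y: "y \<in> Bpp pw pu \<rho>w \<rho>u"
  shows "thompson \<gamma> (F x) (F y)
     \<le> Max (range (\<lambda>k. (transpose A *v \<gamma>) $ k / \<gamma> $ k)) * thompson \<gamma> x y"
  proof -
  let ?B = "Bpp pw pu \<rho>w \<rho>u"
  define M where "M c = (\<Sum>k\<in>UNIV. A $ c $ Some k * Dw x y k) + A $ c $ None * Du x y" for c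
  have pw0: "0 < pw" and pu0: "0 < pu" using pw pu by auto
  have Fd: "\<And>z. z \<in> ?B \<Longrightarrow> (F has_derivative blinfun_apply (F' z)) (at z)"
    using F_deriv S_sub by auto
  have FV: "\<And>z. z \<in> ?B \<Longrightarrow> F z \<in> Vpp" using F_maps by auto
  have Fp1: "0 < fst (F z) $ i $ j" "0 < snd (F z) $ a $ b" if "z \<in> ?B" for z i j a b
  proof -
    obtain w u where "F z = (w,u)" by (cases "F z")
    thus "0 < fst (F z) $ i $ j" "0 < snd (F z) $ a $ b" using FV[OF that] by (auto simp: Vpp_def)
  qed
  have cw: "\<bar>ln (fst (F x) $ i $ j) - ln (fst (F y) $ i $ j)\<bar> \<le> M (Some i)" for i j
    unfolding M_def
    by (rule coord_bound[OF blin_fst x y pw0 pu0 Fd]) (auto intro: Fp1 simp: ww wu)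
  have cu: "\<bar>ln (snd (F x) $ a $ b) - ln (snd (F y) $ a $ b)\<bar> \<le> M None" for a b
    unfolding M_def
    by (rule coord_bound[OF blin_snd x y pw0 pu0 Fd]) (auto intro: Fp1 simp: uw uu)
  have mw: "Max (range (\<lambda>j. \<bar>ln (fst (F x) $ i $ j) - ln (fst (F y) $ i $ j)\<bar>)) \<le> M (Some i)" for i
    by (rule Max.boundedI) (auto intro: cw)
  have mu: "Max (range (\<lambda>(a,b). \<bar>ln (snd (F x) $ a $ b) - ln (snd (F y) $ a $ b)\<bar>)) \<le> M None"
    by (rule Max.boundedI) (auto intro: cu)
  define U where "U = Max (range (\<lambda>k. (transpose A *v \<gamma>) $ k / \<gamma> $ k))"
  define R where "R k = (transpose A *v \<gamma>) $ k" for k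
  have R_eq: "R k = (\<Sum>c\<in>UNIV. A $ c $ k * \<gamma> $ c)" for k
    by (simp add: R_def matrix_vector_mult_def transpose_def)
  have RU: "R k \<le> U * \<gamma> $ k" for k
  proof -
    have "R k / \<gamma> $ k \<le> U" unfolding U_def R_def by (rule Max_ge) auto
    thus ?thesis using \<gamma>_pos[of k] by (simp add: pos_divide_le_eq)
  qed
  have "thompson \<gamma> (F x) (F y) \<le> (\<Sum>i\<in>UNIV. \<gamma> $ Some i * M (Some i)) + \<gamma> $ None * M None"
    unfolding thompson_def
    by (intro add_mono sum_mono mult_left_mono mw mu less_imp_le[OF \<gamma>_pos])
  also have "\<dots> = (\<Sum>c\<in>UNIV. \<gamma> $ c * M c)" by (simp add: sum_option)
  also have "\<dots> = (\<Sum>k\<in>UNIV. R (Some k) * Dw x y k) + R None * Du x y"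
  proof -
    have e1: "(\<Sum>c\<in>UNIV. \<gamma> $ c * M c) = (\<Sum>c\<in>UNIV. \<Sum>k\<in>UNIV. (A $ c $ Some k * \<gamma> $ c) * Dw x y k) + (\<Sum>c\<in>UNIV. A $ c $ None * \<gamma> $ c) * Du x y"
      by (simp add: M_def distrib_left sum.distrib sum_distrib_left sum_distrib_right mult_ac)
    have e2: "(\<Sum>c\<in>UNIV. \<Sum>k\<in>UNIV. (A $ c $ Some k * \<gamma> $ c) * Dw x y k) = (\<Sum>k\<in>UNIV. \<Sum>c\<in>UNIV. (A $ c $ Some k * \<gamma> $ c) * Dw x y k)"
      by (rule sum.swap)
    have e3: "(\<Sum>k\<in>UNIV. \<Sum>c\<in>UNIV. (A $ c $ Some k * \<gamma> $ c) * Dw x y k) = (\<Sum>k\<in>UNIV. R (Some k) * Dw x y k)"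
      by (simp add: R_eq sum_distrib_right)
    have e4: "(\<Sum>c\<in>UNIV. A $ c $ None * \<gamma> $ c) = R None" by (simp add: R_eq)
    show ?thesis using e1 e2 e3 e4 by simp
  qed
  also have "\<dots> \<le> (\<Sum>k\<in>UNIV. (U * \<gamma> $ Some k) * Dw x y k) + (U * \<gamma> $ None) * Du x y"
    by (intro add_mono sum_mono mult_right_mono RU Dw_nonneg Du_nonneg)
  also have "\<dots> = U * thompson \<gamma> x y"
    by (simp add: thompson_def Dw_def Du_def distrib_left sum_distrib_left mult_ac)
  finally show ?thesis unfolding U_def .
qed

end
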